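(* Let $G(\mathcal{M})=(R,T;E;c)$ and $G(\mathcal{M}')=(R,T;E;c')$ be two robot-task graphs where $c$ and $c'$ are injective on $E$. Let $\textsc{Auction}(\mathcal{M})=(W=(w_k),a)$, $\textsc{Auction}(\mathcal{M}')=(W'=(w'_k),a')$, and let $U=(u_k)$ denote the edges with second-best bids on $\textsc{Auction}(\mathcal{M})$. Suppose there exists some $e=w_K\in W$ such that $c'(f)=c(f)$ for all $f\in E\setminus\{e\}$. Then $\textsc{Auction}(\mathcal{M})=\textsc{Auction}(\mathcal{M}')$ if and only if $c(u_K)>c'(e)>\max_{k\in B_e\setminus\{K\}}c(w_k)$ in the case $B_e\setminus\{K\}\ne\emptyset$, and $c(u_K)>c'(e)\ge0$ otherwise.
   Context: $R$ (robots) and $T$ (tasks) are finite disjoint sets with $R\neq\emptyset$, $|R\sqcup T|\ge3$. The robot-task graph $(R,T;E;c)$ has vertex set $R\sqcup T$, edge set $E$ consisting of all 2-element subsets of $R\sqcup T$, and a non-negative edge cost $c:E\to\mathbb{R}_+$ (with $\mathbb{R}_+=[0,\infty)\cup\{\infty\}$); injective means distinct edges have distinct costs. $\textsc{Auction}$ on $(R,T;E;c)$: set $A=\emptyset$ and $a(r)=0$ for all $r\in R$. For $k=1,\dots,|T|$ (bid rounds): let $w_k=\{s,t\}$ be the edge with $s\in R\cup A$, $t\in T\setminus A$ minimising $c(\{s,t\})$; set $a(t)=k$ and $A\leftarrow A\cup\{t\}$. The output is the list $W=(w_1,\dots,w_{|T|})$ of winning edges and the assignment function $a:R\sqcup T\to\{0,\dots,|T|\}$.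 Two auction outputs are equal if they have the same list and the same assignment function. For an edge $e=\{x,y\}$, $B_e=\{k\in\mathbb{Z}:\min(a(x),a(y))<k\le\max(a(x),a(y))\}$ (computed from the output of $\textsc{Auction}(\mathcal{M})$); it is the set of bid rounds in which $e$ is considered. The edge with the second-best bid in round $k$ is the edge $u_k\ne w_k$ with $k\in B_{u_k}$ such that $c(u_k)\le c(f)$ for all edges $f\ne w_k$ with $k\in B_f$. *)

theory Defs
  imports "HOL-Library.Extended_Nonnegative_Real"
begin

definition edges :: "'a set \<Rightarrow> 'a set \<Rightarrow> 'a set set" where
  "edges R T = {{x, y} | x y. x \<in> R \<union> T \<and> y \<in> R \<union> T \<and> x \<noteq> y}"

definition candidates :: "'a set \<Rightarrow> 'a set \<Rightarrow> 'a set \<Rightarrow> 'a set set" where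
  "candidates R T A = {{s, t} | s t. s \<in> R \<union> A \<and> t \<in> T - A}"

text \<open>State after k bid rounds: (list of winning edges, assignment function, A).\<close>
fun auction_rounds ::
  "'a set \<Rightarrow> 'a set \<Rightarrow> ('a set \<Rightarrow> ennreal) \<Rightarrow> nat \<Rightarrow> 'a set list \<times> ('a \<Rightarrow> nat) \<times> 'a set" where
  "auction_rounds R T c 0 = ([], (\<lambda>_. 0), {})"
| "auction_rounds R T c (Suc k) =
     (case auction_rounds R T c k of (W, a, A) \<Rightarrow>
        (let w = (ARG_MIN c f. f \<in> candidates R T A);
             t = the_elem (w \<inter> (T - A))
         in (W @ [w], a(t := Suc k), A \<union> {t})))"

text \<open>Output of Auction: the list W = (w_1,...,w_|T|) (w_k = W ! (k-1)) and the assignment a.\<close>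
definition auction :: "'a set \<Rightarrow> 'a set \<Rightarrow> ('a set \<Rightarrow> ennreal) \<Rightarrow> 'a set list \<times> ('a \<Rightarrow> nat)" where
  "auction R T c = (case auction_rounds R T c (card T) of (W, a, A) \<Rightarrow> (W, a))"

definition winner :: "'a set \<Rightarrow> 'a set \<Rightarrow> ('a set \<Rightarrow> ennreal) \<Rightarrow> nat \<Rightarrow> 'a set" where
  "winner R T c k = fst (auction R T c) ! (k - 1)"

definition bid_rounds :: "('a \<Rightarrow> nat) \<Rightarrow> 'a set \<Rightarrow> nat set" where
  "bid_rounds a e = {k. \<exists>x y. e = {x, y} \<and> min (a x) (a y) < k \<and> k \<le> max (a x) (a y)}"

definition second_best :: "'a set \<Rightarrow> 'a set \<Rightarrow> ('a set \<Rightarrow> ennreal) \<Rightarrow> nat \<Rightarrow> 'a set" where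
  "second_best R T c k =
     (THE u. u \<in> edges R T \<and> u \<noteq> winner R T c k \<and> k \<in> bid_rounds (snd (auction R T c)) u \<and>
        (\<forall>f \<in> edges R T. f \<noteq> winner R T c k \<and> k \<in> bid_rounds (snd (auction R T c)) f \<longrightarrow> c u \<le> c f))"

end

theory Submission
  imports Defs
begin

lemma argmin_is:
  fixes f :: "'b \<Rightarrow> 'c::linorder"
  assumes "finite S" "S \<noteq> {}"
  shows "is_arg_min f (\<lambda>x. x \<in> S) (arg_min f (\<lambda>x. x \<in> S))"
  using arg_min_if_finite[OF assms, of f] unfolding arg_min_on_def is_arg_min_def by blast

lemma bid_rounds_pair: "bid_rounds a {x, y} = {k. min (a x) (a y) < k \<and> k \<le> max (a x) (a y)}"
  unfolding bid_rounds_def by (auto simp: doubleton_eq_iff min_def max_def)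

locale rt =
  fixes R T :: "'a set"
  assumes finR: "finite R" and finT: "finite T" and disj: "R \<inter> T = {}" and Rne: "R \<noteq> {}"
begin

abbreviation "n \<equiv> card T"
definition "Wk c k = fst (auction_rounds R T c k)"
definition "ak c k = fst (snd (auction_rounds R T c k))"
definition "Ak c k = snd (snd (auction_rounds R T c k))"

lemma st_eq: "auction_rounds R T c k = (Wk c k, ak c k, Ak c k)"
  by (simp add: Wk_def ak_def Ak_def)

lemma cand_finite: "finite A \<Longrightarrow> finite (candidates R T A)"
proof -
  assume "finite A"
  have "candidates R T A = (\<lambda>(s,t). {s,t}) ` ((R \<union> A) \<times> (T - A))"
    unfolding candidates_def by auto
  then show ?thesis using \<open>finite A\<close> finR finT by simp
qed

lemma step:
  assumes "Ak c k \<subseteq> T" "card (Ak c k) = k" "k < n"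
  defines "w \<equiv> ARG_MIN c f. f \<in> candidates R T (Ak c k)"
  shows "\<exists>s t. w = {s,t} \<and> s \<in> R \<union> Ak c k \<and> t \<in> T - Ak c k \<and>
     is_arg_min c (\<lambda>f. f \<in> candidates R T (Ak c k)) w \<and>
     Wk c (Suc k) = Wk c k @ [w] \<and> ak c (Suc k) = (ak c k)(t := Suc k) \<and> Ak c (Suc k) = Ak c k \<union> {t}"
proof -
  let ?A = "Ak c k"
  have finA: "finite ?A" using assms(1) finT finite_subset by blast
  have "T - ?A \<noteq> {}" using assms(1-3) by (metis Diff_eq_empty_iff card_mono finT not_le order_antisym)
  then obtain t0 where t0: "t0 \<in> T - ?A" by blast
  obtain r0 where r0: "r0 \<in> R" using Rne by blast
  have ne: "candidates R T ?A \<noteq> {}" using t0 r0 unfolding candidates_def by blast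
  have am: "is_arg_min c (\<lambda>f. f \<in> candidates R T ?A) w"
    unfolding w_def by (rule argmin_is[OF cand_finite[OF finA] ne])
  then have "w \<in> candidates R T ?A" by (simp add: is_arg_min_def)
  then obtain s t where w: "w = {s,t}" and s: "s \<in> R \<union> ?A" and t: "t \<in> T - ?A"
    unfolding candidates_def by blast
  have "s \<notin> T - ?A" using s disj by blast
  then have "w \<inter> (T - ?A) = {t}" using w t by blast
  then have "the_elem (w \<inter> (T - ?A)) = t" by simp
  then have eq: "auction_rounds R T c (Suc k) = (Wk c k @ [w], (ak c k)(t := Suc k), ?A \<union> {t})"
  proof -
    have "auction_rounds R T c (Suc k) = (let w' = ARG_MIN c f. f \<in> candidates R T ?A;
       t' = the_elem (w' \<inter> (T - ?A)) in (Wk c k @ [w'], (ak c k)(t' := Suc k), ?A \<union> {t'}))"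
      by (simp only: auction_rounds.simps st_eq prod.case)
    then show ?thesis using \<open>the_elem (w \<inter> (T - ?A)) = t\<close> by (simp add: w_def Let_def)
  qed
  have "Wk c (Suc k) = Wk c k @ [w]" "ak c (Suc k) = (ak c k)(t := Suc k)" "Ak c (Suc k) = ?A \<union> {t}"
    by (simp_all only: Wk_def ak_def Ak_def eq fst_conv snd_conv)
  then show ?thesis using w s t am by blast
qed

lemma Wk0: "Wk c 0 = []" and ak0: "ak c 0 = (\<lambda>_. 0)" and Ak0: "Ak c 0 = {}"
  by (simp_all add: Wk_def ak_def Ak_def)

definition "invar c k \<longleftrightarrow> length (Wk c k) = k \<and> Ak c k \<subseteq> T \<and> card (Ak c k) = k \<and>
   (\<forall>x. ak c k x \<le> k) \<and> (\<forall>x. x \<in> Ak c k \<longleftrightarrow> ak c k x \<noteq> 0) \<and>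
   (\<forall>j<k. \<exists>s t. Wk c k ! j = {s,t} \<and> t \<in> T \<and> ak c k t = Suc j \<and> s \<in> R \<union> Ak c k \<and> ak c k s \<le> j)"

lemma invariant: "k \<le> n \<Longrightarrow> invar c k"
proof (induction k)
  case 0
  then show ?case by (simp add: invar_def Wk0 ak0 Ak0)
next
  case (Suc k)
  then have I: "invar c k" by simp
  have kn: "k < n" using Suc by simp
  from I have sub: "Ak c k \<subseteq> T" and cd: "card (Ak c k) = k" by (auto simp: invar_def)
  obtain s t where w: "Wk c (Suc k) = Wk c k @ [{s,t}]" "ak c (Suc k) = (ak c k)(t := Suc k)"
    "Ak c (Suc k) = Ak c k \<union> {t}" and s: "s \<in> R \<union> Ak c k" and t: "t \<in> T - Ak c k"
    using step[OF sub cd kn] by metis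
  have finA: "finite (Ak c k)" using sub finT finite_subset by blast
  have st: "s \<noteq> t" using s t disj by blast
  have as: "ak c k s \<le> k" using I by (simp add: invar_def)
  have at: "ak c k t = 0" using I t by (simp add: invar_def)
  show ?case unfolding invar_def
  proof (intro conjI allI impI)
    show "length (Wk c (Suc k)) = Suc k" using I w by (simp add: invar_def)
    show "Ak c (Suc k) \<subseteq> T" using sub t w by auto
    show "card (Ak c (Suc k)) = Suc k" using cd t w finA by simp
    fix x
    show "ak c (Suc k) x \<le> Suc k" using I w by (simp add: invar_def le_SucI)
    show "x \<in> Ak c (Suc k) \<longleftrightarrow> ak c (Suc k) x \<noteq> 0" using I w by (auto simp: invar_def)
  next
    fix j assume j: "j < Suc k"
    show "\<exists>s t. Wk c (Suc k) ! j = {s,t} \<and> t \<in> T \<and> ak c (Suc k) t = Suc j \<and> s \<in> R \<union> Ak c (Suc k) \<and> ak c (Suc k) s \<le> j"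
    proof (cases "j = k")
      case True
      then show ?thesis using I w s t st as by (intro exI[of _ s] exI[of _ t]) (auto simp: invar_def nth_append)
    next
      case False
      then have jk: "j < k" using j by simp
      then obtain s' t' where h: "Wk c k ! j = {s',t'}" "t' \<in> T" "ak c k t' = Suc j"
        "s' \<in> R \<union> Ak c k" "ak c k s' \<le> j" using I by (auto simp: invar_def)
      have "t' \<noteq> t" using h(3) at by auto
      moreover have "s' \<noteq> t" using h(4) t disj by auto
      ultimately show ?thesis using h w I jk
        by (intro exI[of _ s'] exI[of _ t']) (auto simp: invar_def nth_append)
    qed
  qed
qed

lemma inv_step:
  assumes "k < n"
  obtains t where "Wk c (Suc k) = Wk c k @ [ARG_MIN c f. f \<in> candidates R T (Ak c k)]"
     "ak c (Suc k) = (ak c k)(t := Suc k)" "Ak c (Suc k) = Ak c k \<union> {t}" "t \<notin> Ak c k"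
     "is_arg_min c (\<lambda>f. f \<in> candidates R T (Ak c k)) (ARG_MIN c f. f \<in> candidates R T (Ak c k))"
proof -
  have I: "invar c k" using invariant assms by simp
  then have sub: "Ak c k \<subseteq> T" and cd: "card (Ak c k) = k" by (auto simp: invar_def)
  obtain s t where "Wk c (Suc k) = Wk c k @ [ARG_MIN c f. f \<in> candidates R T (Ak c k)]"
     "ak c (Suc k) = (ak c k)(t := Suc k)" "Ak c (Suc k) = Ak c k \<union> {t}" "t \<in> T - Ak c k"
     "is_arg_min c (\<lambda>f. f \<in> candidates R T (Ak c k)) (ARG_MIN c f. f \<in> candidates R T (Ak c k))"
    using step[OF sub cd assms] by metis
  then show ?thesis using that by blast
qed

lemma mono_st:
  assumes "k \<le> m" "m \<le> n"
  shows "Ak c k \<subseteq> Ak c m \<and> (\<forall>x\<in>Ak c k. ak c m x = ak c k x) \<and>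
    (\<forall>x. x \<notin> Ak c k \<longrightarrow> ak c m x = 0 \<or> k < ak c m x) \<and> take k (Wk c m) = Wk c k"
  using assms
proof (induction m)
  case 0
  then show ?case using invariant[of 0 c] by (simp add: invar_def)
next
  case (Suc m)
  show ?case
  proof (cases "k = Suc m")
    case True
    then show ?thesis using invariant[OF Suc.prems(2), of c] by (simp add: invar_def)
  next
    case False
    then have km: "k \<le> m" and mn: "m < n" using Suc.prems by auto
    note IH = Suc.IH[OF km less_imp_le[OF mn]]
    obtain t where h: "Wk c (Suc m) = Wk c m @ [ARG_MIN c f. f \<in> candidates R T (Ak c m)]"
      "ak c (Suc m) = (ak c m)(t := Suc m)" "Ak c (Suc m) = Ak c m \<union> {t}" "t \<notin> Ak c m"
      using inv_step[OF mn, of c] by metis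
    have lm: "length (Wk c m) = m" using invariant[of m c] mn by (simp add: invar_def)
    have tk: "t \<notin> Ak c k" using IH h(4) by blast
    have 1: "Ak c k \<subseteq> Ak c (Suc m)" using IH h(3) by blast
    have 2: "\<forall>x\<in>Ak c k. ak c (Suc m) x = ak c k x"
    proof
      fix x assume x: "x \<in> Ak c k"
      then have "x \<noteq> t" using tk by blast
      then show "ak c (Suc m) x = ak c k x" using IH x h(2) by simp
    qed
    have 3: "\<forall>x. x \<notin> Ak c k \<longrightarrow> ak c (Suc m) x = 0 \<or> k < ak c (Suc m) x"
    proof (intro allI impI)
      fix x assume x: "x \<notin> Ak c k"
      show "ak c (Suc m) x = 0 \<or> k < ak c (Suc m) x"
      proof (cases "x = t")
        case True then show ?thesis using h(2) km by simp
      next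
        case False then show ?thesis using h(2) IH x by simp
      qed
    qed
    have 4: "take k (Wk c (Suc m)) = Wk c k" using h(1) lm km IH by simp
    show ?thesis using 1 2 3 4 by blast
  qed
qed

abbreviation "af c \<equiv> ak c n"

lemma final_A: "Ak c n = T"
  using invariant[of n c] finT by (simp add: invar_def card_subset_eq)

lemma af_facts: "af c x \<noteq> 0 \<longleftrightarrow> x \<in> T" "af c x \<le> n"
  using invariant[of n c] final_A[of c] by (auto simp: invar_def)

lemma Ak_char: "k \<le> n \<Longrightarrow> x \<in> Ak c k \<longleftrightarrow> x \<in> T \<and> af c x \<le> k"
proof -
  assume kn: "k \<le> n"
  note M = mono_st[OF kn order_refl, of c]
  have I: "invar c k" using invariant kn by simp
  show ?thesis
  proof
    assume x: "x \<in> Ak c k"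
    then show "x \<in> T \<and> af c x \<le> k" using M I by (auto simp: invar_def)
  next
    assume "x \<in> T \<and> af c x \<le> k"
    then show "x \<in> Ak c k" using M af_facts(1)[of c x] by force
  qed
qed

lemma RA_char: "k \<le> n \<Longrightarrow> x \<in> R \<union> Ak c k \<longleftrightarrow> x \<in> R \<union> T \<and> af c x \<le> k"
  using Ak_char[of k x c] af_facts(1)[of c x] disj by auto

lemma TA_char: "k \<le> n \<Longrightarrow> x \<in> T - Ak c k \<longleftrightarrow> x \<in> R \<union> T \<and> k < af c x"
  using Ak_char[of k x c] af_facts(1)[of c x] disj by auto

lemma cand_char:
  assumes "k < n"
  shows "f \<in> candidates R T (Ak c k) \<longleftrightarrow> f \<in> edges R T \<and> Suc k \<in> bid_rounds (af c) f"
proof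
  assume "f \<in> candidates R T (Ak c k)"
  then obtain s t where f: "f = {s,t}" "s \<in> R \<union> Ak c k" "t \<in> T - Ak c k"
    unfolding candidates_def by blast
  then have s: "s \<in> R \<union> T" "af c s \<le> k" and t: "t \<in> R \<union> T" "k < af c t"
    using RA_char[of k s c] TA_char[of k t c] assms by auto
  have "s \<noteq> t" using s t by auto
  then have "f \<in> edges R T" using f s t unfolding edges_def by blast
  moreover have "Suc k \<in> bid_rounds (af c) f" using f s t by (simp add: bid_rounds_pair)
  ultimately show "f \<in> edges R T \<and> Suc k \<in> bid_rounds (af c) f" by blast
next
  assume "f \<in> edges R T \<and> Suc k \<in> bid_rounds (af c) f"
  then obtain x y where f: "f = {x,y}" "x \<in> R \<union> T" "y \<in> R \<union> T"
     and b: "min (af c x) (af c y) < Suc k" "Suc k \<le> max (af c x) (af c y)"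
    unfolding edges_def by (auto simp: bid_rounds_pair)
  show "f \<in> candidates R T (Ak c k)"
  proof (cases "af c x \<le> af c y")
    case True
    then have "x \<in> R \<union> Ak c k" "y \<in> T - Ak c k"
      using RA_char[of k x c] TA_char[of k y c] assms f b by auto
    then show ?thesis using f unfolding candidates_def by blast
  next
    case False
    then have "y \<in> R \<union> Ak c k" "x \<in> T - Ak c k"
      using RA_char[of k y c] TA_char[of k x c] assms f b by auto
    then show ?thesis using f unfolding candidates_def by (auto simp: insert_commute)
  qed
qed

lemma W_nth: "k < n \<Longrightarrow> Wk c n ! k = (ARG_MIN c f. f \<in> candidates R T (Ak c k))"
proof -
  assume kn: "k < n"
  have "take (Suc k) (Wk c n) = Wk c (Suc k)" using mono_st[of "Suc k" n c] kn by simp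
  moreover have "length (Wk c k) = k" using invariant[of k c] kn by (simp add: invar_def)
  moreover obtain t where "Wk c (Suc k) = Wk c k @ [ARG_MIN c f. f \<in> candidates R T (Ak c k)]"
    using inv_step[OF kn, of c] by metis
  ultimately show ?thesis by (metis lessI nth_append_length nth_take)
qed

lemma W_argmin: "k < n \<Longrightarrow> is_arg_min c (\<lambda>f. f \<in> candidates R T (Ak c k)) (Wk c n ! k)"
  by (metis W_nth inv_step)

lemma W_win: "1 \<le> j \<Longrightarrow> j \<le> n \<Longrightarrow> \<exists>s t. Wk c n ! (j-1) = {s,t} \<and> t \<in> T \<and> af c t = j \<and> s \<in> R \<union> T \<and> af c s < j"
proof -
  assume j: "1 \<le> j" "j \<le> n"
  have "j - 1 < n" using j by simp
  then obtain s t where "Wk c n ! (j-1) = {s,t}" "t \<in> T" "af c t = Suc (j-1)" "s \<in> R \<union> Ak c n" "af c s \<le> j - 1"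
    using invariant[of n c] unfolding invar_def by blast
  then show ?thesis using j final_A[of c] by (intro exI[of _ s] exI[of _ t]) auto
qed

lemma auction_eq: "auction R T c = (Wk c n, af c)"
  by (simp add: auction_def st_eq)

lemma winner_eq: "winner R T c k = Wk c n ! (k-1)"
  by (simp add: winner_def auction_eq)

lemma step_eq:
  assumes "auction_rounds R T c k = auction_rounds R T c' k"
    and "(ARG_MIN c f. f \<in> candidates R T (Ak c k)) = (ARG_MIN c' f. f \<in> candidates R T (Ak c k))"
  shows "auction_rounds R T c (Suc k) = auction_rounds R T c' (Suc k)"
proof -
  have e: "Wk c' k = Wk c k" "ak c' k = ak c k" "Ak c' k = Ak c k"
    using assms(1) by (simp_all add: Wk_def ak_def Ak_def)
  show ?thesis
    by (simp only: auction_rounds.simps st_eq prod.case e assms(2))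
qed

lemma W_edge: "1 \<le> j \<Longrightarrow> j \<le> n \<Longrightarrow> Wk c n ! (j-1) \<in> edges R T"
proof -
  assume j: "1 \<le> j" "j \<le> n"
  obtain s t where h: "Wk c n ! (j-1) = {s,t}" "t \<in> T" "af c t = j" "s \<in> R \<union> T" "af c s < j"
    using W_win[OF j] by blast
  then have "s \<noteq> t" by auto
  then show ?thesis using h unfolding edges_def by blast
qed

lemma W_distinct: "1 \<le> i \<Longrightarrow> i \<le> n \<Longrightarrow> 1 \<le> j \<Longrightarrow> j \<le> n \<Longrightarrow> Wk c n ! (i-1) = Wk c n ! (j-1) \<Longrightarrow> i = j"
proof -
  assume i: "1 \<le> i" "i \<le> n" and j: "1 \<le> j" "j \<le> n" and eq: "Wk c n ! (i-1) = Wk c n ! (j-1)"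
  obtain s t where h: "Wk c n ! (i-1) = {s,t}" "af c t = i" "af c s < i"
    using W_win[OF i] by blast
  obtain s' t' where h': "Wk c n ! (j-1) = {s',t'}" "af c t' = j" "af c s' < j"
    using W_win[OF j] by blast
  have "{s,t} = {s',t'}" using h h' eq by simp
  then show "i = j" using h h' by (auto simp: doubleton_eq_iff)
qed

lemma B_win: "1 \<le> j \<Longrightarrow> j \<le> n \<Longrightarrow> k \<in> bid_rounds (af c) (Wk c n ! (j-1)) \<Longrightarrow> 1 \<le> k \<and> k \<le> j"
proof -
  assume j: "1 \<le> j" "j \<le> n" and k: "k \<in> bid_rounds (af c) (Wk c n ! (j-1))"
  obtain s t where h: "Wk c n ! (j-1) = {s,t}" "af c t = j" "af c s < j"
    using W_win[OF j] by blast
  then show ?thesis using k by (auto simp: bid_rounds_pair min_def max_def split: if_splits)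
qed

lemma second_best_prop:
  assumes three: "card (R \<union> T) \<ge> 3" and inj: "inj_on c (edges R T)" and K: "1 \<le> K" "K \<le> n"
  shows "second_best R T c K \<in> candidates R T (Ak c (K-1)) \<and> second_best R T c K \<noteq> Wk c n ! (K-1) \<and>
    (\<forall>f \<in> candidates R T (Ak c (K-1)). f \<noteq> Wk c n ! (K-1) \<longrightarrow> c (second_best R T c K) \<le> c f)"
proof -
  define w where "w = Wk c n ! (K-1)"
  define A where "A = Ak c (K-1)"
  have Kn: "K - 1 < n" using K by simp
  have SK: "Suc (K-1) = K" using K by simp
  have cc: "\<And>f. f \<in> candidates R T A \<longleftrightarrow> f \<in> edges R T \<and> K \<in> bid_rounds (af c) f"
    using cand_char[OF Kn, of _ c] SK A_def by simp
  define S where "S = candidates R T A - {w}"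
  have I: "invar c (K-1)" using invariant Kn by simp
  then have sub: "A \<subseteq> T" and cd: "card A = K - 1" by (auto simp: invar_def A_def)
  have finA: "finite A" using sub finT finite_subset by blast
  have "T - A \<noteq> {}" using sub cd Kn by (metis Diff_eq_empty_iff card_mono finT not_le order_antisym)
  then obtain t where t: "t \<in> T - A" by blast
  obtain r where r: "r \<in> R" using Rne by blast
  have rt: "r \<noteq> t" using r t disj by blast
  have two: "\<exists>f1 f2. f1 \<in> candidates R T A \<and> f2 \<in> candidates R T A \<and> f1 \<noteq> f2"
  proof (cases "\<exists>t' \<in> T - A. t' \<noteq> t")
    case True
    then obtain t' where t': "t' \<in> T - A" "t' \<noteq> t" by blast
    have "r \<noteq> t'" using r t' disj by blast
    then have "{r,t} \<noteq> {r,t'}" using t' rt by (auto simp: doubleton_eq_iff)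
    moreover have "{r,t} \<in> candidates R T A" "{r,t'} \<in> candidates R T A"
      using r t t' unfolding candidates_def by blast+
    ultimately show ?thesis by blast
  next
    case False
    then have Tt: "T - A = {t}" using t by blast
    show ?thesis
    proof (cases "\<exists>s \<in> R \<union> A. s \<noteq> r")
      case True
      then obtain s where s: "s \<in> R \<union> A" "s \<noteq> r" by blast
      have "s \<noteq> t" using s t disj by blast
      then have "{r,t} \<noteq> {s,t}" using s rt by (auto simp: doubleton_eq_iff)
      moreover have "{r,t} \<in> candidates R T A" "{s,t} \<in> candidates R T A"
        using r t s unfolding candidates_def by blast+
      ultimately show ?thesis by blast
    next
      case False
      then have "R \<union> A \<subseteq> {r}" by blast
      then have "R \<union> T \<subseteq> {r, t}" using Tt sub by blast
      then have "card (R \<union> T) \<le> 2"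
        by (metis card_2_iff card_mono finite.emptyI finite.insertI rt)
      then show ?thesis using three by simp
    qed
  qed
  then have Sne: "S \<noteq> {}" unfolding S_def by blast
  have finS: "finite S" unfolding S_def using cand_finite[OF finA] by simp
  define u where "u = (ARG_MIN c f. f \<in> S)"
  have am: "is_arg_min c (\<lambda>f. f \<in> S) u" unfolding u_def by (rule argmin_is[OF finS Sne])
  have uS: "u \<in> S" and umin: "\<forall>f\<in>S. c u \<le> c f" using am by (auto simp: is_arg_min_linorder)
  have Sc: "\<And>f. f \<in> S \<longleftrightarrow> f \<in> edges R T \<and> f \<noteq> w \<and> K \<in> bid_rounds (snd (auction R T c)) f"
    unfolding S_def using cc by (auto simp: auction_eq)
  have wK: "winner R T c K = w" by (simp add: winner_eq w_def)
  have "second_best R T c K = u"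
    unfolding second_best_def wK
  proof (rule the_equality)
    have "u \<in> edges R T" "u \<noteq> w" "K \<in> bid_rounds (snd (auction R T c)) u" using uS Sc by auto
    moreover have "\<forall>f\<in>edges R T. f \<noteq> w \<and> K \<in> bid_rounds (snd (auction R T c)) f \<longrightarrow> c u \<le> c f"
    proof (intro ballI impI)
      fix f assume "f \<in> edges R T" "f \<noteq> w \<and> K \<in> bid_rounds (snd (auction R T c)) f"
      then have "f \<in> S" using Sc by simp
      then show "c u \<le> c f" using umin by simp
    qed
    ultimately show "u \<in> edges R T \<and> u \<noteq> w \<and> K \<in> bid_rounds (snd (auction R T c)) u \<and>
      (\<forall>f\<in>edges R T. f \<noteq> w \<and> K \<in> bid_rounds (snd (auction R T c)) f \<longrightarrow> c u \<le> c f)"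
      by blast
  next
    fix u' assume h: "u' \<in> edges R T \<and> u' \<noteq> w \<and> K \<in> bid_rounds (snd (auction R T c)) u' \<and>
      (\<forall>f\<in>edges R T. f \<noteq> w \<and> K \<in> bid_rounds (snd (auction R T c)) f \<longrightarrow> c u' \<le> c f)"
    then have u'S: "u' \<in> S" using Sc by simp
    have ue: "u \<in> edges R T" "u \<noteq> w" "K \<in> bid_rounds (snd (auction R T c)) u" using uS Sc by auto
    have "c u \<le> c u'" using umin u'S by simp
    moreover have "c u' \<le> c u" using h ue by simp
    ultimately have "c u' = c u" by simp
    moreover have "u' \<in> edges R T" using h by simp
    ultimately show "u' = u" using inj ue(1) by (meson inj_onD)
  qed
  then show ?thesis using uS umin unfolding S_def A_def w_def by blast
qed

lemma rounds_eq_from_argmins: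
  assumes "\<forall>k<n. (ARG_MIN c f. f \<in> candidates R T (Ak c k)) = (ARG_MIN c' f. f \<in> candidates R T (Ak c k))"
  shows "m \<le> n \<Longrightarrow> auction_rounds R T c m = auction_rounds R T c' m"
proof (induction m)
  case 0 then show ?case by simp
next
  case (Suc m)
  then have mn: "m < n" and IH: "auction_rounds R T c m = auction_rounds R T c' m" by auto
  show ?case using step_eq[OF IH] assms mn by blast
qed

lemma rounds_eq_from_auction:
  assumes "auction R T c = auction R T c'"
  shows "m \<le> n \<Longrightarrow> auction_rounds R T c m = auction_rounds R T c' m"
proof (induction m)
  case 0 then show ?case by simp
next
  case (Suc m)
  then have mn: "m < n" and IH: "auction_rounds R T c m = auction_rounds R T c' m" by auto
  have A: "Ak c' m = Ak c m" using IH by (simp add: Ak_def)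
  have W: "Wk c n = Wk c' n" using assms by (simp add: auction_eq)
  have "(ARG_MIN c f. f \<in> candidates R T (Ak c m)) = (ARG_MIN c' f. f \<in> candidates R T (Ak c m))"
    using W_nth[OF mn, of c] W_nth[OF mn, of c'] W A by simp
  then show ?case by (rule step_eq[OF IH])
qed

end

theorem lemma7:
  fixes R T :: "'a set" and c c' :: "'a set \<Rightarrow> ennreal" and K :: nat and e :: "'a set"
  assumes "finite R" and "finite T" and "R \<inter> T = {}" and "R \<noteq> {}"
    and "card (R \<union> T) \<ge> 3"
    and "inj_on c (edges R T)" and "inj_on c' (edges R T)"
    and "1 \<le> K" and "K \<le> card T"
    and "e = winner R T c K"
    and "\<forall>f \<in> edges R T - {e}. c' f = c f"
  shows "auction R T c = auction R T c' \<longleftrightarrow>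
    (if bid_rounds (snd (auction R T c)) e - {K} \<noteq> {}
     then c (second_best R T c K) > c' e \<and>
          c' e > Max ((\<lambda>k. c (winner R T c k)) ` (bid_rounds (snd (auction R T c)) e - {K}))
     else c (second_best R T c K) > c' e \<and> c' e \<ge> 0)"
proof -
  interpret rt R T using assms(1-4) by unfold_locales
  note three = assms(5) and injc = assms(6) and injc' = assms(7) and K = assms(8,9)
  note same = assms(11)
  define W where "W = Wk c n"
  define a where "a = af c"
  define u where "u = second_best R T c K"
  have eK: "e = W ! (K-1)" using assms(10) by (simp add: winner_eq W_def)
  have win: "\<And>k. winner R T c k = W ! (k-1)" by (simp add: winner_eq W_def)
  have sa: "snd (auction R T c) = a" by (simp add: auction_eq a_def)
  have Kn: "K - 1 < n" and SK: "Suc (K-1) = K" using K by auto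
  have eE: "e \<in> edges R T" using W_edge[OF K] eK W_def by simp
  note SB = second_best_prop[OF three injc K, folded u_def W_def, folded eK]
  have uC: "u \<in> candidates R T (Ak c (K-1))" and ue: "u \<noteq> e"
    and umin: "\<forall>f \<in> candidates R T (Ak c (K-1)). f \<noteq> e \<longrightarrow> c u \<le> c f" using SB by auto
  have uE: "u \<in> edges R T" using uC cand_char[OF Kn] by blast
  have cu: "c' u = c u" using same uE ue by simp
  have Be: "\<And>k. k \<in> bid_rounds a e \<Longrightarrow> 1 \<le> k \<and> k \<le> K"
    using B_win[OF K, of _ c] eK unfolding W_def a_def by simp
  have finB: "finite (bid_rounds a e - {K})"
    by (rule finite_subset[of _ "{..K}"]) (auto dest: Be)
  have candB: "\<And>k. k < n \<Longrightarrow> e \<in> candidates R T (Ak c k) \<longleftrightarrow> Suc k \<in> bid_rounds a e"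
    using cand_char[of _ e c] eE unfolding a_def by simp
  show ?thesis unfolding sa win u_def[symmetric]
  proof
    assume eq: "auction R T c = auction R T c'"
    have Aeq: "\<And>k. k \<le> n \<Longrightarrow> Ak c' k = Ak c k"
      using rounds_eq_from_auction[OF eq] by (simp add: Ak_def)
    have Weq: "Wk c' n = W" using eq by (simp add: auction_eq W_def)
    have am': "\<And>k. k < n \<Longrightarrow> is_arg_min c' (\<lambda>f. f \<in> candidates R T (Ak c k)) (W ! k)"
      using W_argmin[of _ c'] Aeq Weq by (simp add: less_imp_le)
    have 1: "c u > c' e"
    proof -
      have "c' e \<le> c' u" using am'[OF Kn] uC eK by (simp add: is_arg_min_linorder)
      moreover have "c' e \<noteq> c' u" using inj_on_eq_iff[OF injc' eE uE] ue by simp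
      ultimately show ?thesis using cu by simp
    qed
    have 2: "c (W ! (k-1)) < c' e" if k: "k \<in> bid_rounds a e - {K}" for k
    proof -
      have k1: "1 \<le> k" "k \<le> K" "k \<noteq> K" using k Be by auto
      then have kn: "k - 1 < n" using K by simp
      have "e \<in> candidates R T (Ak c (k-1))" using candB[OF kn] k k1 by simp
      then have le: "c' (W ! (k-1)) \<le> c' e" using am'[OF kn] by (simp add: is_arg_min_linorder)
      have ne: "W ! (k-1) \<noteq> e"
        using W_distinct[of k K c] k1 K eK W_def by auto
      have wE: "W ! (k-1) \<in> edges R T" using W_edge[of k c] k1 K W_def by simp
      have "c' (W ! (k-1)) \<noteq> c' e" using inj_on_eq_iff[OF injc' wE eE] ne by simp
      moreover have "c' (W ! (k-1)) = c (W ! (k-1))" using same wE ne by simp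
      ultimately show ?thesis using le by simp
    qed
    show "if bid_rounds a e - {K} \<noteq> {}
     then c u > c' e \<and> c' e > Max ((\<lambda>k. c (W ! (k-1))) ` (bid_rounds a e - {K}))
     else c u > c' e \<and> c' e \<ge> 0"
    proof (cases "bid_rounds a e - {K} \<noteq> {}")
      case True
      have "Max ((\<lambda>k. c (W ! (k-1))) ` (bid_rounds a e - {K})) < c' e"
        using True finB 2 by (subst Max_less_iff) auto
      then show ?thesis using True 1 by simp
    next
      case False then show ?thesis using 1 by simp
    qed
  next
    assume cond: "if bid_rounds a e - {K} \<noteq> {}
     then c u > c' e \<and> c' e > Max ((\<lambda>k. c (W ! (k-1))) ` (bid_rounds a e - {K}))
     else c u > c' e \<and> c' e \<ge> 0"
    then have 1: "c' e < c u" by (simp split: if_splits)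
    have 2: "c (W ! (k-1)) < c' e" if k: "k \<in> bid_rounds a e - {K}" for k
    proof -
      have ne: "bid_rounds a e - {K} \<noteq> {}" using k by blast
      then have "Max ((\<lambda>k. c (W ! (k-1))) ` (bid_rounds a e - {K})) < c' e" using cond by simp
      then show ?thesis using finB k by (subst (asm) Max_less_iff) auto
    qed
    have "\<forall>k<n. (ARG_MIN c f. f \<in> candidates R T (Ak c k)) = (ARG_MIN c' f. f \<in> candidates R T (Ak c k))"
    proof (intro allI impI)
      fix k assume kn: "k < n"
      define C where "C = candidates R T (Ak c k)"
      have CE: "C \<subseteq> edges R T" using cand_char[OF kn] C_def by blast
      have w: "W ! k = (ARG_MIN c f. f \<in> C)" using W_nth[OF kn] C_def W_def by simp
      have amw: "is_arg_min c (\<lambda>f. f \<in> C) (W ! k)" using W_argmin[OF kn] C_def W_def by simp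
      then have wC: "W ! k \<in> C" and wmin: "\<And>y. y \<in> C \<Longrightarrow> c (W ! k) \<le> c y"
        by (auto simp: is_arg_min_linorder)
      have key: "\<forall>y. y \<in> C \<longrightarrow> c' (W ! k) \<le> c' y"
      proof (cases "e \<in> C")
        case False
        then have "W ! k \<noteq> e" using wC by blast
        have cw: "c' (W ! k) = c (W ! k)" using same CE wC \<open>W ! k \<noteq> e\<close> by blast
        show ?thesis
        proof (intro allI impI)
          fix y assume y: "y \<in> C"
          then have "y \<noteq> e" using False by blast
          then have "c' y = c y" using same y CE by blast
          then show "c' (W ! k) \<le> c' y" using cw wmin[OF y] by simp
        qed
      next
        case True
        then have Bk: "Suc k \<in> bid_rounds a e" using candB[OF kn] C_def by simp
        then have "Suc k \<le> K" using Be by blast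
        then show ?thesis
        proof (cases "Suc k = K")
          case True
          then have wk: "W ! k = e" using eK by auto
          have CK: "C = candidates R T (Ak c (K-1))" using True C_def by auto
          show ?thesis
          proof (intro allI impI)
            fix y assume y: "y \<in> C"
            show "c' (W ! k) \<le> c' y"
            proof (cases "y = e")
              case True then show ?thesis using wk by simp
            next
              case False
              then have "c u \<le> c y" using umin y CK by blast
              moreover have "c' y = c y" using same y CE False by blast
              ultimately show ?thesis using 1 wk by simp
            qed
          qed
        next
          case False
          then have kK: "Suc k < K" using \<open>Suc k \<le> K\<close> by simp
          then have "Suc k \<in> bid_rounds a e - {K}" using Bk by simp
          then have lt: "c (W ! k) < c' e" using 2[of "Suc k"] by simp
          have ne: "W ! k \<noteq> e"
            using W_distinct[of "Suc k" K c] kK K eK W_def kn by auto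
          have wE: "W ! k \<in> edges R T" using CE wC by blast
          have cw: "c' (W ! k) = c (W ! k)" using same wE ne by simp
          show ?thesis
          proof (intro allI impI)
            fix y assume y: "y \<in> C"
            show "c' (W ! k) \<le> c' y"
            proof (cases "y = e")
              case True then show ?thesis using lt cw by simp
            next
              case False
              moreover have "c' y = c y" using same y CE False by blast
              ultimately show ?thesis using wmin[OF y] cw by simp
            qed
          qed
        qed
      qed
      have "inj_on c' {x. x \<in> C}" using injc' CE by (simp add: inj_on_subset)
      then have "(ARG_MIN c' f. f \<in> C) = W ! k" using wC key by (rule arg_min_inj_eq)
      then show "(ARG_MIN c f. f \<in> C) = (ARG_MIN c' f. f \<in> C)" using w by simp
    qed
    then have "auction_rounds R T c n = auction_rounds R T c' n"
      using rounds_eq_from_argmins[of c c' n] by simp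
    then show "auction R T c = auction R T c'" by (simp add: auction_def)
  qed
qed

end
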